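(* Let $\mathbb{T}^2=(\mathbb{R}/2\pi\mathbb{Z})^2$, let $\varphi:\mathbb{T}^2\to\mathbb{R}$ be nontrivial and real-analytic, and let $w:\mathbb{T}^2\times\mathbb{T}^2\to\mathbb{R}$ be real-analytic with a unique non-degenerate minimum at $(0,0)$. Let $p\in U_\delta(0)$ with $\varphi(q_0(p))=0$. Then for the coefficients $\hat\alpha_1(p)$ and $\hat c_1(p)$ of the expansion described in the context, $|\hat\alpha_1(p)|+|\hat c_1(p)|\neq0$.
   Context: For $p\in\mathbb{T}^2$ write $w_p(q)=w(p,q)$. There is a neighborhood $U_\delta(0)\subset\mathbb{T}^2$ of $0$ and an analytic map $q_0:U_\delta(0)\to\mathbb{T}^2$ such that $q_0(p)$ is the unique non-degenerate minimum point of $w_p$; $m(p)=\min_q w_p(q)$, $M(p)=\max_q w_p(q)$. Let $\Omega(p;z)=\int_{\mathbb{T}^2}\frac{\varphi^2(s)\,ds}{w_p(s)-z}$ and, for $\mu>0$, $\Delta(\mu,p;z)=1-\mu\Omega(p;z)$. When $\varphi(q_0(p))=0$, set $\mu(p)=\left(\int_{\mathbb{T}^2}\frac{\varphi^2(s)ds}{w_p(s)-m(p)}\right)^{-1}>0$. In this case, for sufficiently small $m(p)-z>0$, one has the convergent expansion $\Delta(\mu,p;z)=1-\frac{\mu}{\mu(p)}-\mu\ln(m(p)-z)\sum_{n\ge1}\hat\alpha_n(p)(m(p)-z)^n-\mu\sum_{n\ge1}\hat c_n(p)(m(p)-z)^n$ with real coefficients $\hat\alpha_n(p),\hat c_n(p)$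 (independent of $\mu$), where $\ln$ is real for $m(p)-z>0$. *)

theory Defs
  imports "HOL-Analysis.Analysis"
begin

text \<open>The torus T^n = (R / 2 pi Z)^n is modelled by real^'n; functions on
  the torus are functions on real^'n that are 2 pi-periodic in each coordinate.\<close>

definition torus_periodic :: "(real^'n \<Rightarrow> real) \<Rightarrow> bool" where
  "torus_periodic f \<longleftrightarrow> (\<forall>x i. f (x + (2*pi) *\<^sub>R axis i 1) = f x)"

definition in_lattice :: "real^'n \<Rightarrow> bool" where
  "in_lattice x \<longleftrightarrow> (\<forall>i. \<exists>k::int. x $ i = 2 * pi * of_int k)"

definition real_analytic_at :: "(real^'n \<Rightarrow> real) \<Rightarrow> real^'n \<Rightarrow> bool" where
  "real_analytic_at f x \<longleftrightarrow>
     (\<exists>r>0. \<exists>a :: ('n \<Rightarrow> nat) \<Rightarrow> real. \<forall>y\<in>ball x r.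
        ((\<lambda>k. a k * (\<Prod>i\<in>UNIV. (y $ i - x $ i) ^ k i)) has_sum f y) UNIV)"

definition real_analytic_on :: "(real^'n) set \<Rightarrow> (real^'n \<Rightarrow> real) \<Rightarrow> bool" where
  "real_analytic_on S f \<longleftrightarrow> (\<forall>x\<in>S. real_analytic_at f x)"

definition join_fun :: "(real^'n \<Rightarrow> real^'n \<Rightarrow> real) \<Rightarrow> real^('n+'n) \<Rightarrow> real" where
  "join_fun w z = w (\<chi> i. z $ Inl i) (\<chi> i. z $ Inr i)"

definition partial_deriv :: "'n \<Rightarrow> (real^'n \<Rightarrow> real) \<Rightarrow> real^'n \<Rightarrow> real" where
  "partial_deriv j f y = deriv (\<lambda>s. f (y + s *\<^sub>R axis j 1)) 0"

definition hessian :: "(real^'n \<Rightarrow> real) \<Rightarrow> real^'n \<Rightarrow> real^'n^'n" where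
  "hessian f x = (\<chi> i j. partial_deriv i (partial_deriv j f) x)"

definition unique_nondeg_min :: "(real^'n \<Rightarrow> real) \<Rightarrow> real^'n \<Rightarrow> bool" where
  "unique_nondeg_min f x0 \<longleftrightarrow>
     (\<forall>x. f x0 \<le> f x) \<and> (\<forall>x. f x = f x0 \<longrightarrow> in_lattice (x - x0)) \<and>
     det (hessian f x0) \<noteq> 0"

definition m_fun :: "(real^2 \<Rightarrow> real^2 \<Rightarrow> real) \<Rightarrow> real^2 \<Rightarrow> real" where
  "m_fun w p = (INF q. w p q)"

text \<open>Integration over T^2 = integration over the fundamental cell [0,2 pi]^2.\<close>
definition torus_box :: "(real^2) set" where
  "torus_box = cbox 0 (\<chi> i. 2 * pi)"

definition Omega :: "(real^2 \<Rightarrow> real) \<Rightarrow> (real^2 \<Rightarrow> real^2 \<Rightarrow> real) \<Rightarrow> real^2 \<Rightarrow> real \<Rightarrow> real" where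
  "Omega \<phi> w p z = integral torus_box (\<lambda>s. (\<phi> s)^2 / (w p s - z))"

definition Delta :: "(real^2 \<Rightarrow> real) \<Rightarrow> (real^2 \<Rightarrow> real^2 \<Rightarrow> real) \<Rightarrow> real \<Rightarrow> real^2 \<Rightarrow> real \<Rightarrow> real" where
  "Delta \<phi> w \<mu> p z = 1 - \<mu> * Omega \<phi> w p z"

definition mu_p :: "(real^2 \<Rightarrow> real) \<Rightarrow> (real^2 \<Rightarrow> real^2 \<Rightarrow> real) \<Rightarrow> real^2 \<Rightarrow> real" where
  "mu_p \<phi> w p = inverse (integral torus_box (\<lambda>s. (\<phi> s)^2 / (w p s - m_fun w p)))"

end

theory Submission
  imports Defs "HOL-Real_Asymp.Real_Asymp"
begin


lemma tlnt: "((\<lambda>t::real. t * ln t) \<longlongrightarrow> 0) (at_right 0)"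
  by real_asymp

lemma analytic_cont:
  fixes f :: "real^'n \<Rightarrow> real"
  assumes "real_analytic_at f x"
  shows "isCont f x"
proof -
  obtain r a where r: "r > 0" and H: "\<And>y. y\<in>ball x r \<Longrightarrow>
        ((\<lambda>k. a k * (\<Prod>i\<in>UNIV. (y $ i - x $ i) ^ k i)) has_sum f y) UNIV"
    using assms unfolding real_analytic_at_def by blast
  define \<rho> where "\<rho> = r / (2 * real CARD('n))"
  have \<rho>: "\<rho> > 0" using r by (simp add: \<rho>_def)
  define y0 where "y0 = x + (\<chi> i. \<rho>)"
  have "norm (y0 - x) \<le> (\<Sum>i\<in>UNIV. \<bar>(y0 - x)$i\<bar>)" by (rule norm_le_l1_cart)
  also have "\<dots> = real CARD('n) * \<rho>" using \<rho> by (simp add: y0_def)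
  also have "\<dots> = r/2" unfolding \<rho>_def by simp
  finally have "y0 \<in> ball x r" using r by (simp add: dist_norm norm_minus_commute)
  from H[OF this] have "((\<lambda>k. a k * (\<Prod>i\<in>UNIV. \<rho> ^ k i)) has_sum f y0) UNIV"
    by (simp add: y0_def)
  hence "(\<lambda>k. a k * \<rho> ^ (\<Sum>i\<in>UNIV. k i)) summable_on UNIV"
    by (simp add: power_sum has_sum_imp_summable)
  hence "(\<lambda>k. \<bar>a k * \<rho> ^ (\<Sum>i\<in>UNIV. k i)\<bar>) summable_on UNIV"
    by (subst (asm) summable_on_iff_abs_summable_on_real) simp
  then obtain M where M: "((\<lambda>k. \<bar>a k\<bar> * \<rho> ^ (\<Sum>i\<in>UNIV. k i)) has_sum M) UNIV"
    using \<rho> by (auto simp: abs_mult summable_on_def)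
  have M0: "M \<ge> 0" using has_sum_nonneg[OF M] \<rho> by auto
  have fx: "f x = a (\<lambda>_. 0)"
  proof -
    have "((\<lambda>k. a k * (\<Prod>i\<in>UNIV. (x $ i - x $ i) ^ k i)) has_sum f x) UNIV"
      using H[of x] r by simp
    moreover have "(\<lambda>k. a k * (\<Prod>i\<in>UNIV. (x $ i - x $ i) ^ k i)) = (\<lambda>k. if k = (\<lambda>_. 0) then a k else 0)"
    proof
      fix k :: "'n \<Rightarrow> nat"
      show "a k * (\<Prod>i\<in>UNIV. (x $ i - x $ i) ^ k i) = (if k = (\<lambda>_. 0) then a k else 0)"
      proof (cases "k = (\<lambda>_. 0)")
        case False
        then obtain j where "k j \<noteq> 0" by auto
        hence "(\<Prod>i\<in>UNIV. (x $ i - x $ i) ^ k i) = 0"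
          by (intro prod_zero) auto
        thus ?thesis using False by simp
      qed simp
    qed
    ultimately have "((\<lambda>k. if k = (\<lambda>_. 0) then a k else 0) has_sum f x) UNIV" by simp
    moreover have "((\<lambda>k. if k = (\<lambda>_. 0) then a k else 0) has_sum a (\<lambda>_. 0)) UNIV"
      by (rule has_sum_finite_neutralI[of "{\<lambda>_. 0}"]) auto
    ultimately show ?thesis using has_sum_unique by blast
  qed
  show ?thesis
    unfolding continuous_at_eps_delta
  proof (intro allI impI)
    fix e :: real assume e: "e > 0"
    define d where "d = min 1 (e / (M + 1))"
    have d: "d > 0" "d \<le> 1" "d * M < e"
    proof -
      show "d > 0" "d \<le> 1" using e M0 by (auto simp: d_def)
      have "d * M \<le> e / (M+1) * M" using M0 by (intro mult_right_mono) (auto simp: d_def)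
      also have "\<dots> < e" using e M0 by (simp add: field_simps)
      finally show "d * M < e" .
    qed
    show "\<exists>d'>0. \<forall>y. dist y x < d' \<longrightarrow> dist (f y) (f x) < e"
    proof (intro exI[of _ "d * \<rho>"] conjI allI impI)
      show "d * \<rho> > 0" using d \<rho> by simp
      fix y assume dy: "dist y x < d * \<rho>"
      have comp: "\<bar>y $ i - x $ i\<bar> \<le> d * \<rho>" for i
        using component_le_norm_cart[of "y - x" i] dy by (simp add: dist_norm)
      have cn: "real CARD('n) \<ge> 1" by (simp add: Suc_leI)
      have "d * \<rho> \<le> \<rho>" using d \<rho> by simp
      also have "\<rho> < r"
      proof -
        have "r / (2 * real CARD('n)) \<le> r / 2" using r cn by (intro divide_left_mono) auto
        thus ?thesis using r unfolding \<rho>_def by linarith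
      qed
      finally have yin: "y \<in> ball x r" using dy by (simp add: dist_commute)
      have xin: "x \<in> ball x r" using r by simp
      from has_sum_add[OF H[OF yin] has_sum_uminusI[OF H[OF xin]]]
      have D: "((\<lambda>k. a k * (\<Prod>i\<in>UNIV. (y $ i - x $ i) ^ k i) - a k * (\<Prod>i\<in>UNIV. (x $ i - x $ i) ^ k i)) has_sum (f y - f x)) UNIV"
        by simp
      have B: "\<bar>a k * (\<Prod>i\<in>UNIV. (y $ i - x $ i) ^ k i) - a k * (\<Prod>i\<in>UNIV. (x $ i - x $ i) ^ k i)\<bar>
               \<le> d * (\<bar>a k\<bar> * \<rho> ^ (\<Sum>i\<in>UNIV. k i))" for k
      proof (cases "k = (\<lambda>_. 0)")
        case True
        thus ?thesis using d \<rho> by simp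
      next
        case False
        then obtain j where j: "k j \<noteq> 0" by auto
        hence z: "(\<Prod>i\<in>UNIV. (x $ i - x $ i) ^ k i) = 0"
          by (intro prod_zero) auto
        have "\<bar>\<Prod>i\<in>UNIV. (y $ i - x $ i) ^ k i\<bar> = (\<Prod>i\<in>UNIV. \<bar>y $ i - x $ i\<bar> ^ k i)"
          by (simp add: abs_prod power_abs)
        also have "\<dots> \<le> (\<Prod>i\<in>UNIV. (d * \<rho>) ^ k i)"
          by (intro prod_mono conjI power_mono comp) auto
        also have "\<dots> = d ^ (\<Sum>i\<in>UNIV. k i) * \<rho> ^ (\<Sum>i\<in>UNIV. k i)"
          by (simp add: power_sum power_mult_distrib prod.distrib)
        also have "\<dots> \<le> d * \<rho> ^ (\<Sum>i\<in>UNIV. k i)"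
        proof (intro mult_right_mono)
          have "k j \<le> (\<Sum>i\<in>UNIV. k i)" by (intro member_le_sum) auto
          hence "1 \<le> (\<Sum>i\<in>UNIV. k i)" using j by linarith
          thus "d ^ (\<Sum>i\<in>UNIV. k i) \<le> d"
            using d power_decreasing[of 1 "\<Sum>i\<in>UNIV. k i" d] by simp
        qed (use \<rho> in simp)
        finally have "\<bar>\<Prod>i\<in>UNIV. (y $ i - x $ i) ^ k i\<bar> \<le> d * \<rho> ^ (\<Sum>i\<in>UNIV. k i)" .
        hence "\<bar>a k\<bar> * \<bar>\<Prod>i\<in>UNIV. (y $ i - x $ i) ^ k i\<bar> \<le> \<bar>a k\<bar> * (d * \<rho> ^ (\<Sum>i\<in>UNIV. k i))"
          by (intro mult_left_mono) auto
        thus ?thesis unfolding z by (simp add: abs_mult mult_ac)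
      qed
      have M': "((\<lambda>k. d * (\<bar>a k\<bar> * \<rho> ^ (\<Sum>i\<in>UNIV. k i))) has_sum (d * M)) UNIV"
        using has_sum_cmult_right[OF M] by simp
      have M'': "((\<lambda>k. - (d * (\<bar>a k\<bar> * \<rho> ^ (\<Sum>i\<in>UNIV. k i)))) has_sum (- (d * M))) UNIV"
        using has_sum_uminusI[OF M'] by simp
      have neg: "\<And>u v::real. \<bar>u\<bar> \<le> v \<Longrightarrow> -v \<le> u" by linarith
      have "f y - f x \<le> d * M"
        by (rule has_sum_mono[OF D M']) (use B abs_le_D1 in blast)
      moreover have "- (d * M) \<le> f y - f x"
        by (rule has_sum_mono[OF M'' D]) (rule neg[OF B])
      ultimately show "dist (f y) (f x) < e" using d by (simp add: dist_real_def abs_le_iff)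
    qed
  qed
qed



lemma analytic_cont_on:
  fixes f :: "real^'n \<Rightarrow> real"
  assumes "real_analytic_on UNIV f"
  shows "continuous_on S f"
  using assms analytic_cont unfolding real_analytic_on_def
  by (meson UNIV_I continuous_at_imp_continuous_on)

lemma periodic_nat:
  assumes "torus_periodic f"
  shows "f (x + (2*pi*real n) *\<^sub>R axis i 1) = f x"
proof (induction n)
  case (Suc n)
  have "x + (2*pi*real (Suc n)) *\<^sub>R axis i 1 = (x + (2*pi*real n) *\<^sub>R axis i 1) + (2*pi) *\<^sub>R axis i 1"
    by (simp add: algebra_simps)
  hence "f (x + (2*pi*real (Suc n)) *\<^sub>R axis i 1) = f ((x + (2*pi*real n) *\<^sub>R axis i 1) + (2*pi) *\<^sub>R axis i 1)" by (rule arg_cong)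
  also have "\<dots> = f (x + (2*pi*real n) *\<^sub>R axis i 1)"
    using assms unfolding torus_periodic_def by blast
  finally show ?case using Suc by simp
qed simp

lemma periodic_int:
  assumes "torus_periodic f"
  shows "f (x + (2*pi*real_of_int k) *\<^sub>R axis i 1) = f x"
proof (cases "k \<ge> 0")
  case True
  then obtain n where "k = int n" by (intro that[of "nat k"]) simp
  thus ?thesis using periodic_nat[OF assms] by simp
next
  case False
  then obtain n where n: "k = - int n" by (intro that[of "nat (-k)"]) simp
  have "f ((x + (2*pi*real_of_int k) *\<^sub>R axis i 1) + (2*pi*real n) *\<^sub>R axis i 1) = f (x + (2*pi*real_of_int k) *\<^sub>R axis i 1)"
    by (rule periodic_nat[OF assms])
  moreover have "(x + (2*pi*real_of_int k) *\<^sub>R axis i 1) + (2*pi*real n) *\<^sub>R axis i 1 = x"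
    using n by (simp add: algebra_simps)
  ultimately show ?thesis by simp
qed

lemma mod_bounds:
  fixes a :: real
  shows "0 \<le> a + 2*pi*real_of_int (- \<lfloor>a/(2*pi)\<rfloor>) \<and> a + 2*pi*real_of_int (- \<lfloor>a/(2*pi)\<rfloor>) \<le> 2*pi"
proof -
  have p: "2*pi > 0" by simp
  have "real_of_int \<lfloor>a/(2*pi)\<rfloor> \<le> a/(2*pi)" by (rule of_int_floor_le)
  hence 1: "2*pi*real_of_int \<lfloor>a/(2*pi)\<rfloor> \<le> a" using p by (simp add: le_divide_eq mult_ac)
  have "a/(2*pi) < real_of_int \<lfloor>a/(2*pi)\<rfloor> + 1" by (rule real_of_int_floor_add_one_gt)
  hence "a/(2*pi) < (real_of_int \<lfloor>a/(2*pi)\<rfloor> + 1)" by simp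
  hence "a < (real_of_int \<lfloor>a/(2*pi)\<rfloor> + 1) * (2*pi)" using p by (subst (asm) divide_less_eq) simp
  hence 2: "a < 2*pi*real_of_int \<lfloor>a/(2*pi)\<rfloor> + 2*pi" by (simp add: algebra_simps)
  show ?thesis using 1 2 by simp
qed

lemma periodic_into_box:
  fixes f :: "real^2 \<Rightarrow> real"
  assumes "torus_periodic f"
  shows "\<exists>y\<in>torus_box. f y = f x"
proof -
  define y where "y = (x + (2*pi*real_of_int (- \<lfloor>x$1/(2*pi)\<rfloor>)) *\<^sub>R axis 1 1)
     + (2*pi*real_of_int (- \<lfloor>x$2/(2*pi)\<rfloor>)) *\<^sub>R axis 2 1"
  have "f y = f x" unfolding y_def by (simp only: periodic_int[OF assms])
  moreover have "y \<in> torus_box"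
    unfolding torus_box_def mem_box_cart
  proof
    fix i :: 2
    have "i = 1 \<or> i = 2" using exhaust_2 by auto
    thus "0 $ i \<le> y $ i \<and> y $ i \<le> (\<chi> i. 2 * pi) $ i"
      using mod_bounds[of "x$1"] mod_bounds[of "x$2"]
      by (auto simp: y_def axis_def)
  qed
  ultimately show ?thesis by blast
qed

lemma series_aux:
  fixes a :: "nat \<Rightarrow> real"
  assumes S: "\<forall>t\<in>{0<..<\<epsilon>}. summable (\<lambda>n. a (Suc n) * t ^ Suc n)" and e: "\<epsilon> > 0"
    and a1: "a 1 = 0"
  shows "isCont (\<lambda>t. \<Sum>n. a (n+2) * t^n) 0"
    and "\<forall>t\<in>{0<..<\<epsilon>}. (\<Sum>n. a (Suc n) * t ^ Suc n) = t^2 * (\<Sum>n. a (n+2) * t^n)"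
proof -
  have sm: "summable (\<lambda>n. a (n+2) * t^n)" if t: "t \<in> {0<..<\<epsilon>}" for t
  proof -
    have "summable (\<lambda>n. a (Suc (Suc n)) * t ^ Suc (Suc n))"
      using S t summable_Suc_iff[of "\<lambda>n. a (Suc n) * t ^ Suc n"] by auto
    hence A: "summable (\<lambda>n. inverse (t^2) * (a (Suc (Suc n)) * t ^ Suc (Suc n)))"
      by (rule summable_mult)
    have eq: "(\<lambda>n. inverse (t^2) * (a (Suc (Suc n)) * t ^ Suc (Suc n))) = (\<lambda>n. a (n+2) * t^n)"
      using t by (auto simp: field_simps power2_eq_square)
    show ?thesis using A unfolding eq .
  qed
  show "isCont (\<lambda>t. \<Sum>n. a (n+2) * t^n) 0"
    by (rule isCont_powser[OF sm[of "\<epsilon>/2"]]) (use e in auto)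
  show "\<forall>t\<in>{0<..<\<epsilon>}. (\<Sum>n. a (Suc n) * t ^ Suc n) = t^2 * (\<Sum>n. a (n+2) * t^n)"
  proof
    fix t assume t: "t \<in> {0<..<\<epsilon>}"
    have "(\<Sum>n. a (Suc (Suc n)) * t ^ Suc (Suc n)) = (\<Sum>n. a (Suc n) * t ^ Suc n) - a 1 * t"
      using suminf_split_head[OF S[rule_format, OF t]] by simp
    hence "(\<Sum>n. a (Suc n) * t ^ Suc n) = (\<Sum>n. t^2 * (a (n+2) * t ^ n))"
      using a1 by (simp add: power2_eq_square mult_ac)
    also have "\<dots> = t^2 * (\<Sum>n. a (n+2) * t^n)"
      by (rule suminf_mult[OF sm[OF t]])
    finally show "(\<Sum>n. a (Suc n) * t ^ Suc n) = t^2 * (\<Sum>n. a (n+2) * t^n)" .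
  qed
qed

lemma w_cont:
  fixes w :: "real^2 \<Rightarrow> real^2 \<Rightarrow> real"
  assumes "real_analytic_on UNIV (join_fun w)"
  shows "continuous_on S (w p)"
proof -
  define e :: "real^2 \<Rightarrow> real^(2+2)" where "e = (\<lambda>s. \<chi> j. case j of Inl i \<Rightarrow> p$i | Inr i \<Rightarrow> s$i)"
  have ce: "continuous_on S e"
    unfolding e_def
  proof (intro continuous_on_vec_lambda)
    fix j :: "2+2"
    show "continuous_on S (\<lambda>s. case j of Inl i \<Rightarrow> p$i | Inr i \<Rightarrow> s$i)"
      by (cases j) (auto intro!: continuous_intros)
  qed
  have "continuous_on S (join_fun w \<circ> e)"
    by (rule continuous_on_compose[OF ce analytic_cont_on[OF assms]])
  moreover have "join_fun w \<circ> e = w p"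
    by (rule ext) (simp add: join_fun_def e_def vec_eq_iff)
  ultimately show ?thesis by simp
qed



theorem lemma3p4:
  fixes \<phi> :: "real^2 \<Rightarrow> real"
    and w :: "real^2 \<Rightarrow> real^2 \<Rightarrow> real"
    and \<delta> :: real
    and q0 :: "real^2 \<Rightarrow> real^2"
    and p :: "real^2"
    and \<mu> :: real
    and \<alpha> c :: "nat \<Rightarrow> real"
  assumes phi_analytic: "real_analytic_on UNIV \<phi>"
    and phi_periodic: "torus_periodic \<phi>"
    and phi_nontrivial: "\<exists>x. \<phi> x \<noteq> 0"
    and w_analytic: "real_analytic_on UNIV (join_fun w)"
    and w_periodic: "torus_periodic (join_fun w)"
    and w_min: "unique_nondeg_min (join_fun w) 0"
    and delta_pos: "\<delta> > 0"
    and q0_analytic: "\<forall>i. real_analytic_on (ball 0 \<delta>) (\<lambda>p'. q0 p' $ i)"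
    and q0_min: "\<forall>p'\<in>ball 0 \<delta>. unique_nondeg_min (w p') (q0 p')"
    and p_in: "p \<in> ball 0 \<delta>"
    and phi_q0: "\<phi> (q0 p) = 0"
    and mu_pos: "\<mu> > 0"
    and expansion: "\<exists>\<epsilon>>0. \<forall>t\<in>{0<..<\<epsilon>}.
        summable (\<lambda>n. \<alpha> (Suc n) * t ^ Suc n) \<and>
        summable (\<lambda>n. c (Suc n) * t ^ Suc n) \<and>
        Delta \<phi> w \<mu> p (m_fun w p - t) =
          1 - \<mu> / mu_p \<phi> w p
            - \<mu> * ln t * (\<Sum>n. \<alpha> (Suc n) * t ^ Suc n)
            - \<mu> * (\<Sum>n. c (Suc n) * t ^ Suc n)"
  shows "\<bar>\<alpha> 1\<bar> + \<bar>c 1\<bar> \<noteq> 0"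

proof (rule ccontr)
  assume "\<not> \<bar>\<alpha> 1\<bar> + \<bar>c 1\<bar> \<noteq> 0"
  hence a1: "\<alpha> 1 = 0" and c1: "c 1 = 0" by auto
  obtain \<epsilon> where e: "\<epsilon> > 0" and E: "\<forall>t\<in>{0<..<\<epsilon>}.
        summable (\<lambda>n. \<alpha> (Suc n) * t ^ Suc n) \<and>
        summable (\<lambda>n. c (Suc n) * t ^ Suc n) \<and>
        Delta \<phi> w \<mu> p (m_fun w p - t) =
          1 - \<mu> / mu_p \<phi> w p
            - \<mu> * ln t * (\<Sum>n. \<alpha> (Suc n) * t ^ Suc n)
            - \<mu> * (\<Sum>n. c (Suc n) * t ^ Suc n)"
    using expansion by blast
  have Sa: "\<forall>t\<in>{0<..<\<epsilon>}. summable (\<lambda>n. \<alpha> (Suc n) * t ^ Suc n)" using E by blast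
  have Sc: "\<forall>t\<in>{0<..<\<epsilon>}. summable (\<lambda>n. c (Suc n) * t ^ Suc n)" using E by blast
  define Ba where "Ba = (\<lambda>t::real. \<Sum>n. \<alpha> (n+2) * t^n)"
  define Bc where "Bc = (\<lambda>t::real. \<Sum>n. c (n+2) * t^n)"
  have cBa: "isCont Ba 0" unfolding Ba_def by (rule series_aux(1)[OF Sa e a1])
  have cBc: "isCont Bc 0" unfolding Bc_def by (rule series_aux(1)[OF Sc e c1])
  have eqa: "\<forall>t\<in>{0<..<\<epsilon>}. (\<Sum>n. \<alpha> (Suc n) * t ^ Suc n) = t^2 * Ba t"
    unfolding Ba_def by (rule series_aux(2)[OF Sa e a1])
  have eqc: "\<forall>t\<in>{0<..<\<epsilon>}. (\<Sum>n. c (Suc n) * t ^ Suc n) = t^2 * Bc t"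
    unfolding Bc_def by (rule series_aux(2)[OF Sc e c1])
  define m where "m = m_fun w p"
  define g where "g = (\<lambda>t. Omega \<phi> w p (m - t))"
  define J where "J = 1 / mu_p \<phi> w p"
  have geq: "g t = J + ln t * (t^2 * Ba t) + t^2 * Bc t" if t: "t \<in> {0<..<\<epsilon>}" for t
  proof -
    have "1 - \<mu> * g t = 1 - \<mu> * J - \<mu> * ln t * (t^2 * Ba t) - \<mu> * (t^2 * Bc t)"
      using E[rule_format, OF t] eqa[rule_format, OF t] eqc[rule_format, OF t]
      by (simp add: Delta_def g_def m_def J_def)
    hence "\<mu> * g t = \<mu> * (J + ln t * (t^2 * Ba t) + t^2 * Bc t)"
      by (simp add: algebra_simps)
    thus ?thesis using mu_pos by simp
  qed
  have wmin: "\<forall>x. w p (q0 p) \<le> w p x"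
    using q0_min p_in unfolding unique_nondeg_min_def by blast
  have wge: "m \<le> w p s" for s
    unfolding m_def m_fun_def
    by (rule cINF_lower) (use wmin in \<open>auto intro: bdd_belowI2\<close>)
  have cphi: "continuous_on S \<phi>" for S by (rule analytic_cont_on[OF phi_analytic])
  have cw: "continuous_on S (w p)" for S by (rule w_cont[OF w_analytic])
  have gint: "(\<lambda>s. \<phi> s ^ 2 / (w p s - (m - t))) integrable_on torus_box" if "t > 0" for t
    unfolding torus_box_def
  proof (rule integrable_continuous)
    show "continuous_on (cbox 0 (\<chi> i. 2 * pi)) (\<lambda>s. \<phi> s ^ 2 / (w p s - (m - t)))"
    proof -
      have pos: "w p s - (m - t) \<noteq> 0" for s using wge[of s] that by linarith
      show ?thesis by (intro continuous_intros cphi cw) (use pos in auto)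
    qed
  qed
  define h where "h = (\<lambda>s. \<phi> s ^ 2 / (w p s - (m - 1)) ^ 2)"
  define K where "K = integral torus_box h"
  have hint: "h integrable_on torus_box"
    unfolding torus_box_def h_def
  proof (rule integrable_continuous)
    show "continuous_on (cbox 0 (\<chi> i. 2 * pi)) (\<lambda>s. \<phi> s ^ 2 / (w p s - (m - 1)) ^ 2)"
    proof -
      have pos: "w p s - (m - 1) \<noteq> 0" for s using wge[of s] by linarith
      show ?thesis by (intro continuous_intros cphi cw) (use pos in auto)
    qed
  qed
  have hnn: "h s \<ge> 0" for s unfolding h_def by simp
  have Kpos: "K > 0"
  proof -
    have "K \<ge> 0" unfolding K_def by (rule integral_nonneg[OF hint hnn])
    moreover have "K \<noteq> 0"
    proof
      assume K0: "K = 0"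
      obtain x where x: "\<phi> x \<noteq> 0" using phi_nontrivial by blast
      obtain y where y: "y \<in> torus_box" "\<phi> y = \<phi> x" using periodic_into_box[OF phi_periodic] by blast
      have "h y = 0"
      proof (rule has_integral_0_cbox_imp_0[of 0 "\<chi> i. 2 * pi"])
        show "continuous_on (cbox 0 (\<chi> i. 2 * pi)) h"
        proof -
          have pos: "w p s - (m - 1) \<noteq> 0" for s using wge[of s] by linarith
          show ?thesis unfolding h_def by (intro continuous_intros cphi cw) (use pos in auto)
        qed
        show "0 \<le> h x" for x by (rule hnn)
        show "(h has_integral 0) (cbox 0 (\<chi> i. 2 * pi))"
          using hint K0 unfolding K_def torus_box_def by (simp add: has_integral_integral)
        have "(\<chi> i. pi) \<in> box 0 (\<chi> i::2. 2 * pi)" by (simp add: mem_box_cart)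
        thus "box 0 (\<chi> i::2. 2 * pi) \<noteq> {}" by blast
        show "y \<in> cbox 0 (\<chi> i. 2 * pi)" using y unfolding torus_box_def by simp
      qed
      moreover have "w p y - (m - 1) \<ge> 1" using wge[of y] by simp
      ultimately show False using y x unfolding h_def by simp
    qed
    ultimately show ?thesis by simp
  qed
  have key: "t / 2 * K \<le> g (t/2) - g t" if t: "0 < t" "t \<le> 1" for t
  proof -
    have "g (t/2) - g t = integral torus_box (\<lambda>s. \<phi> s ^ 2 / (w p s - (m - t/2)) - \<phi> s ^ 2 / (w p s - (m - t)))"
      unfolding g_def Omega_def using t by (intro integral_diff[symmetric] gint) auto
    also have "\<dots> \<ge> integral torus_box (\<lambda>s. t/2 * h s)"
    proof (rule integral_le)
      show "(\<lambda>s. t/2 * h s) integrable_on torus_box"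
        using integrable_on_mult_right[OF hint] by simp
      show "(\<lambda>s. \<phi> s ^ 2 / (w p s - (m - t/2)) - \<phi> s ^ 2 / (w p s - (m - t))) integrable_on torus_box"
        using t by (intro integrable_diff gint) auto
      fix s
      define D where "D = w p s - m"
      define P where "P = \<phi> s ^ 2"
      have D: "D \<ge> 0" using wge[of s] by (simp add: D_def)
      have P: "P \<ge> 0" by (simp add: P_def)
      have "P / (D + t/2) - P / (D + t) = P * (t/2) / ((D + t/2) * (D + t))"
        using D t by (simp add: field_simps)
      also have "\<dots> \<ge> P * (t/2) / ((D + 1) * (D + 1))"
      proof (rule divide_left_mono)
        show "(D + t/2) * (D + t) \<le> (D + 1) * (D + 1)"
          using D t by (intro mult_mono) auto
        show "0 \<le> P * (t/2)" using P t by simp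
        show "0 < (D + 1) * (D + 1) * ((D + t/2) * (D + t))" using D t by simp
      qed
      finally have "P * (t/2) / ((D + 1) * (D + 1)) \<le> P / (D + t/2) - P / (D + t)" .
      thus "t/2 * h s \<le> \<phi> s ^ 2 / (w p s - (m - t/2)) - \<phi> s ^ 2 / (w p s - (m - t))"
        unfolding h_def D_def P_def by (simp add: power2_eq_square algebra_simps)
    qed
    also have "integral torus_box (\<lambda>s. t/2 * h s) = t/2 * K"
      unfolding K_def using integral_mult[OF hint, of "t/2"] by simp
    finally show ?thesis by simp
  qed
  define L where "L = (\<lambda>t::real. t * ln t)"
  define F where "F = (\<lambda>t. (L t / 4 - t * ln 2 / 4) * Ba (t/2) + t/4 * Bc (t/2) - L t * Ba t - t * Bc t)"
  have Fle: "K / 2 \<le> F t" if t: "t \<in> {0<..<min 1 \<epsilon>}" for t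
  proof -
    have t1: "t \<in> {0<..<\<epsilon>}" and t2: "t/2 \<in> {0<..<\<epsilon>}" using t by auto
    have "g (t/2) - g t = t * F t"
      unfolding geq[OF t1] geq[OF t2] F_def L_def using t
      by (simp add: ln_div power2_eq_square field_simps)
    with key[of t] t have "t/2 * K \<le> t * F t" by simp
    thus ?thesis using t by (simp add: field_simps)
  qed
  have LL: "(L \<longlongrightarrow> 0) (at_right 0)" unfolding L_def by (rule tlnt)
  have id0: "((\<lambda>t::real. t) \<longlongrightarrow> 0) (at_right 0)" by (rule tendsto_ident_at)
  have half0: "((\<lambda>t::real. t/2) \<longlongrightarrow> 0) (at_right 0)" using tendsto_divide[OF id0 tendsto_const[of 2]] by simp
  have Ba2: "((\<lambda>t. Ba (t/2)) \<longlongrightarrow> Ba 0) (at_right 0)" by (rule isCont_tendsto_compose[OF cBa half0])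
  have Bc2: "((\<lambda>t. Bc (t/2)) \<longlongrightarrow> Bc 0) (at_right 0)" by (rule isCont_tendsto_compose[OF cBc half0])
  have Ba1: "(Ba \<longlongrightarrow> Ba 0) (at_right 0)" using cBa by (simp add: isCont_def filterlim_at_split)
  have Bc1: "(Bc \<longlongrightarrow> Bc 0) (at_right 0)" using cBc by (simp add: isCont_def filterlim_at_split)
  have "(F \<longlongrightarrow> (0 / 4 - 0 * ln 2 / 4) * Ba 0 + 0/4 * Bc 0 - 0 * Ba 0 - 0 * Bc 0) (at_right 0)"
    unfolding F_def by (intro tendsto_diff tendsto_add tendsto_mult tendsto_divide LL id0 Ba2 Bc2 Ba1 Bc1 tendsto_const) auto
  hence F0: "(F \<longlongrightarrow> 0) (at_right 0)" by simp
  have ev: "eventually (\<lambda>t. K/2 \<le> F t) (at_right 0)"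
    using eventually_at_right_real[of 0 "min 1 \<epsilon>"] e Fle
    by (auto elim: eventually_mono)
  have "K / 2 \<le> 0"
    by (rule tendsto_le[OF trivial_limit_at_right_real F0 tendsto_const ev])
  thus False using Kpos by simp
qed

end
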